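(* Let $q>0$, let $f$ be a $q$-concave function on $\mathbb R^n$ which is not $m$-isolated, for some $1\le m\le n$. If there exists an $m$-Dynkin vector for $f$, then $C(f)\ne\varnothing$.
   Context: A twice differentiable $f:\mathbb R^n\to\mathbb R$ is $q$-concave if $\frac{\partial f}{\partial x_i}(0)=0$ for all $i$, $\frac{\partial^2 f}{\partial x_i\partial x_j}\ge0$ everywhere for all $i,j$, and $\frac{\partial^2 f}{\partial x_i^2}\ge q$ everywhere for all $i$. With $e_m$ the $m$-th standard basis vector, $f$ is $m$-isolated if $\frac{\partial f}{\partial x_k}(e_m)=0$ for all $k\ne m$. A nonzero $d\in\mathbb Z^n$ is an $m$-Dynkin vector for $f$ if $0\le\frac{\partial f}{\partial x_m}(d)\le q$ and $\frac{\partial f}{\partial x_j}(d)=0$ for all $j\ne m$. $H_n=\{x:\sum x_i=0\}$; $C(f)$ is the set of $h\in H_n\setminus\{0\}$ with either all $\partial f/\partial x_i(h)\le0$ or all $\ge0$. *)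

theory Defs
  imports "HOL-Analysis.Analysis"
begin

text \<open>Points of R^n are vectors of type real^'n (the index type 'n has n elements).
  The i-th standard basis vector is axis i 1.\<close>

definition pd :: "(real^'n \<Rightarrow> real) \<Rightarrow> 'n \<Rightarrow> real^'n \<Rightarrow> real" where
  "pd f i x = deriv (\<lambda>t. f (x + t *\<^sub>R axis i 1)) 0"

definition twice_differentiable :: "(real^'n \<Rightarrow> real) \<Rightarrow> bool" where
  "twice_differentiable f \<longleftrightarrow>
     (\<forall>x. f differentiable at x) \<and> (\<forall>i x. pd f i differentiable at x)"

definition q_concave :: "real \<Rightarrow> (real^'n \<Rightarrow> real) \<Rightarrow> bool" where
  "q_concave q f \<longleftrightarrow>
     (\<forall>i. pd f i 0 = 0) \<and>
     (\<forall>i j x. pd (pd f j) i x \<ge> 0) \<and>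
     (\<forall>i x. pd (pd f i) i x \<ge> q)"

definition m_isolated :: "(real^'n \<Rightarrow> real) \<Rightarrow> 'n \<Rightarrow> bool" where
  "m_isolated f m \<longleftrightarrow> (\<forall>k. k \<noteq> m \<longrightarrow> pd f k (axis m 1) = 0)"

definition dynkin_vector :: "real \<Rightarrow> (real^'n \<Rightarrow> real) \<Rightarrow> 'n \<Rightarrow> real^'n \<Rightarrow> bool" where
  "dynkin_vector q f m d \<longleftrightarrow>
     d \<noteq> 0 \<and> (\<forall>i. d $ i \<in> \<int>) \<and>
     0 \<le> pd f m d \<and> pd f m d \<le> q \<and>
     (\<forall>j. j \<noteq> m \<longrightarrow> pd f j d = 0)"

definition H :: "(real^'n) set" where
  "H = {x. (\<Sum>i\<in>UNIV. x $ i) = 0}"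

definition C :: "(real^'n \<Rightarrow> real) \<Rightarrow> (real^'n) set" where
  "C f = {h \<in> H - {0}. (\<forall>i. pd f i h \<le> 0) \<or> (\<forall>i. pd f i h \<ge> 0)}"

end

theory Submission
  imports Defs
begin

lemma dir_deriv:
  fixes g :: "real^'n \<Rightarrow> real"
  assumes "g differentiable at y"
  shows "((\<lambda>s. g (y + s *\<^sub>R v)) has_real_derivative deriv (\<lambda>s. g (y + s *\<^sub>R v)) 0) (at 0)"
proof -
  have "(\<lambda>s::real. y + s *\<^sub>R v) differentiable at 0"
    by (intro derivative_intros)
  moreover have "g differentiable at ((\<lambda>s::real. y + s *\<^sub>R v) 0)" using assms by simp
  ultimately have "(g \<circ> (\<lambda>s::real. y + s *\<^sub>R v)) differentiable at 0"
    by (rule differentiable_chain_at)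
  then show ?thesis by (simp add: DERIV_deriv_iff_real_differentiable o_def)
qed

lemma line_deriv:
  fixes g :: "real^'n \<Rightarrow> real"
  assumes "\<forall>y. g differentiable at y"
  shows "((\<lambda>t. g (x + t *\<^sub>R v)) has_real_derivative
     deriv (\<lambda>s. g ((x + t *\<^sub>R v) + s *\<^sub>R v)) 0) (at t)"
proof -
  have "((\<lambda>s. g ((x + t *\<^sub>R v) + s *\<^sub>R v)) has_real_derivative
     deriv (\<lambda>s. g ((x + t *\<^sub>R v) + s *\<^sub>R v)) 0) (at 0)"
    using dir_deriv assms by blast
  moreover have "(\<lambda>s. g ((x + t *\<^sub>R v) + s *\<^sub>R v)) = (\<lambda>s. g (x + (s + t) *\<^sub>R v))"
    by (simp add: scaleR_add_left algebra_simps)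
  ultimately have "((\<lambda>s. g (x + (s + t) *\<^sub>R v)) has_real_derivative
     deriv (\<lambda>s. g ((x + t *\<^sub>R v) + s *\<^sub>R v)) 0) (at 0)" by simp
  then show ?thesis using DERIV_shift[where f="\<lambda>u. g (x + u *\<^sub>R v)" and x=0 and z=t] by simp
qed

lemma mono_line:
  fixes f :: "real^'n \<Rightarrow> real"
  assumes diff: "\<forall>y. pd f j differentiable at y"
    and lb: "\<forall>y. pd (pd f j) i y \<ge> c"
    and t: "t \<ge> 0"
  shows "pd f j (x + t *\<^sub>R axis i 1) - pd f j x \<ge> c * t"
proof (cases "t = 0")
  case True then show ?thesis by simp
next
  case False
  with t have tp: "0 < t" by simp
  define \<phi> where "\<phi> = (\<lambda>t. pd f j (x + t *\<^sub>R axis i 1))"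
  have D: "\<And>s. (\<phi> has_real_derivative pd (pd f j) i (x + s *\<^sub>R axis i 1)) (at s)"
    unfolding \<phi>_def pd_def[of "pd f j"] using line_deriv[OF diff] by blast
  obtain z where "0 < z" "z < t" and eq: "\<phi> t - \<phi> 0 = (t - 0) * pd (pd f j) i (x + z *\<^sub>R axis i 1)"
    using MVT2[OF tp, of \<phi> "\<lambda>s. pd (pd f j) i (x + s *\<^sub>R axis i 1)"] D by blast
  have "c * t \<le> t * pd (pd f j) i (x + z *\<^sub>R axis i 1)"
    using lb tp by (simp add: mult.commute mult_left_mono)
  then show ?thesis using eq unfolding \<phi>_def by simp
qed

theorem lemma3:
  fixes f :: "real^'n \<Rightarrow> real" and q :: real and m :: 'n
  assumes "q > 0"
    and "twice_differentiable f"
    and "q_concave q f"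
    and "\<not> m_isolated f m"
    and "\<exists>d. dynkin_vector q f m d"
  shows "C f \<noteq> {}"
proof -
  obtain d where dv: "dynkin_vector q f m d" using assms(5) by blast
  have diff: "\<forall>y. pd f j differentiable at y" for j using assms(2) unfolding twice_differentiable_def by blast
  have z0: "pd f i 0 = 0" for i using assms(3) unfolding q_concave_def by blast
  have nn: "\<forall>y. pd (pd f j) i y \<ge> 0" for i j using assms(3) unfolding q_concave_def by blast
  have dq: "\<forall>y. pd (pd f i) i y \<ge> q" for i using assms(3) unfolding q_concave_def by blast
  define e where "e = (axis m 1 :: real^'n)"
  have M1: "pd f j (x + t *\<^sub>R e) \<ge> pd f j x" if "t \<ge> 0" for j x t
    using mono_line[OF diff nn that, where x=x] unfolding e_def by simp
  have M2: "pd f m (x + t *\<^sub>R e) - pd f m x \<ge> q * t" if "t \<ge> 0" for x t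
    using mono_line[OF diff dq that, where x=x] unfolding e_def by simp
  define s where "s = (\<Sum>i\<in>UNIV. d $ i)"
  have "s \<in> \<int>" unfolding s_def using dv unfolding dynkin_vector_def by (intro Ints_sum) blast
  then obtain k where sk: "s = of_int k" by (auto elim: Ints_cases)
  have d0: "d \<noteq> 0" and dm0: "0 \<le> pd f m d" and dmq: "pd f m d \<le> q"
    and dj: "\<And>j. j \<noteq> m \<Longrightarrow> pd f j d = 0" using dv unfolding dynkin_vector_def by auto
  have sumE: "(\<Sum>i\<in>UNIV. e $ i) = 1" unfolding e_def axis_def
    by (simp add: sum.delta)
  show ?thesis
  proof (cases "d = s *\<^sub>R e")
    case True
    have "s \<noteq> 0" using True d0 by auto
    then have "k \<ge> 1 \<or> k \<le> -1" using sk by auto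
    then show ?thesis
    proof
      assume k1: "k \<ge> 1"
      then have s1: "s \<ge> 1" using sk by simp
      have "pd f m (0 + s *\<^sub>R e) - pd f m 0 \<ge> q * s" using M2[of s 0] M2[of "-s" d] s1 by auto
      then have "q * s \<le> q * 1" using True z0 dmq by simp
      then have "s \<le> 1" using assms(1) by simp
      with s1 have "s = 1" by simp
      then have "d = axis m 1" using True e_def by simp
      then have "m_isolated f m" unfolding m_isolated_def using dj by simp
      with assms(4) show ?thesis by simp
    next
      assume k1: "k \<le> -1"
      then have s1: "-s \<ge> 1" using sk by simp
      have "pd f m (d + (-s) *\<^sub>R e) - pd f m d \<ge> q * (-s)" using M2[of s 0] M2[of "-s" d] s1 by auto
      moreover have "d + (-s) *\<^sub>R e = 0" using True by simp
      moreover have "q * (-s) > 0" using assms(1) s1 by (simp add: mult_pos_neg)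
      ultimately show ?thesis using z0 dm0 by simp
    qed
  next
    case False
    define h where "h = d - s *\<^sub>R e"
    have hH: "h \<in> H" unfolding H_def h_def
      by (simp add: sum_subtractf sum_distrib_left[symmetric] sumE s_def)
    have h0: "h \<noteq> 0" using False unfolding h_def by simp
    consider "k = 0" | "k \<ge> 1" | "k \<le> -1" by linarith
    then show ?thesis
    proof cases
      case 1
      then have "h = d" unfolding h_def using sk by simp
      then have "\<forall>i. pd f i h \<ge> 0" using dm0 dj by (metis order_refl)
      then have "h \<in> C f" unfolding C_def using hH h0 by simp
      then show ?thesis by blast
    next
      case 2
      then have s1: "s \<ge> 1" using sk by simp
      have hd: "h + s *\<^sub>R e = d" unfolding h_def by simp
      have "pd f j h \<le> 0" for j
      proof (cases "j = m")
        case True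
        have "pd f m d - pd f m h \<ge> q * s" using M2[of s h] s1 hd by simp
        moreover have "q * s \<ge> q * 1" using s1 assms(1) by (intro mult_left_mono) auto
        ultimately show ?thesis using True dmq by simp
      next
        case False
        show ?thesis using M1[of s j h] s1 hd dj[OF False] by simp
      qed
      then have "h \<in> C f" unfolding C_def using hH h0 by simp
      then show ?thesis by blast
    next
      case 3
      then have s1: "-s \<ge> 1" using sk by simp
      have hd: "d + (-s) *\<^sub>R e = h" unfolding h_def by simp
      have "pd f j h \<ge> 0" for j
      proof -
        have "pd f j d \<ge> 0" using dm0 dj by (cases "j = m") auto
        then show ?thesis using M1[of "-s" j d] s1 hd by simp
      qed
      then have "h \<in> C f" unfolding C_def using hH h0 by simp
      then show ?thesis by blast
    qed
  qed
qed

end
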